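(* Let $X$ be a $T_1$ topological space with at least two points and let $f\neq g$ be vertices of $\Gamma(C_c(X)_F)$. Then (i) $c(f,g)=3$ iff $Z(f)\cup Z(g)=X$ and $Z(f)\cap Z(g)\neq\emptyset$; (ii) $c(f,g)=4$ iff either ($Z(f)\cup Z(g)=X$ and $Z(f)\cap Z(g)=\emptyset$) or ($Z(f)\cup Z(g)\neq X$ and $Z(f)\cap Z(g)\neq\emptyset$); (iii) $c(f,g)=6$ iff $Z(f)\cup Z(g)\neq X$ and $Z(f)\cap Z(g)=\emptyset$.
   Context: $C_c(X)_F$ denotes the set of all functions $f:X\to\mathbb{R}$ whose range is countable and whose set of points of discontinuity is finite. $Z(f)=\{x:f(x)=0\}$. $\Gamma(C_c(X)_F)$ is the zero-divisor graph: vertices are the nonzero zero divisors of $C_c(X)_F$, and distinct vertices $f,g$ are adjacent iff $fg=0$. $c(f,g)$ is the length of a shortest cycle (with distinct vertices) containing both $f$ and $g$, and $c(f,g)=\infty$ if no such cycle exists. *)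

theory Defs
  imports Complex_Main "HOL-Library.Extended_Nat"
begin

text \<open>The space X is the whole carrier of a type of class t1_space
  (topology given by the type class). C_c(X)_F: real functions with countable
  range and finitely many points of discontinuity.\<close>

definition CcF :: "('a::topological_space \<Rightarrow> real) set" where
  "CcF = {f. countable (range f) \<and> finite {x. \<not> (f \<longlongrightarrow> f x) (at x)}}"

definition Zset :: "('a \<Rightarrow> real) \<Rightarrow> 'a set" where
  "Zset f = {x. f x = 0}"

definition zd_vertex :: "('a::topological_space \<Rightarrow> real) \<Rightarrow> bool" where
  "zd_vertex f \<longleftrightarrow> f \<in> CcF \<and> f \<noteq> (\<lambda>x. 0) \<and>
     (\<exists>h\<in>CcF. h \<noteq> (\<lambda>x. 0) \<and> (\<forall>x. f x * h x = 0))"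

definition zd_adj :: "('a::topological_space \<Rightarrow> real) \<Rightarrow> ('a \<Rightarrow> real) \<Rightarrow> bool" where
  "zd_adj f g \<longleftrightarrow> zd_vertex f \<and> zd_vertex g \<and> f \<noteq> g \<and> (\<forall>x. f x * g x = 0)"

definition zd_cycle :: "('a::topological_space \<Rightarrow> real) list \<Rightarrow> bool" where
  "zd_cycle cs \<longleftrightarrow> 3 \<le> length cs \<and> distinct cs \<and>
     (\<forall>i < length cs. zd_adj (cs ! i) (cs ! ((i + 1) mod length cs)))"

text \<open>c(f,g): least length of a cycle containing f and g; infinity if none
  (Inf of the empty set of enat is infinity).\<close>
definition cfg :: "('a::topological_space \<Rightarrow> real) \<Rightarrow> ('a \<Rightarrow> real) \<Rightarrow> enat" where
  "cfg f g = Inf {enat (length cs) | cs. zd_cycle cs \<and> f \<in> set cs \<and> g \<in> set cs}"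

end

theory Submission
  imports Defs
begin

definition ind :: "'a \<Rightarrow> 'a \<Rightarrow> real" where
  "ind x = (\<lambda>z. if z = x then 1 else 0)"

lemma ind_CcF: "ind (x::'a::t1_space) \<in> CcF"
proof -
  have "range (ind x) \<subseteq> {0,1}" by (auto simp: ind_def)
  hence "countable (range (ind x))" using countable_finite finite_subset by blast
  moreover have "{y. \<not> (ind x \<longlongrightarrow> ind x y) (at y)} \<subseteq> {x}"
  proof
    fix y assume y: "y \<in> {y. \<not> (ind x \<longlongrightarrow> ind x y) (at y)}"
    show "y \<in> {x}"
    proof (rule ccontr)
      assume "y \<notin> {x}"
      hence "y \<noteq> x" by simp
      have "\<forall>\<^sub>F z in at y. z \<noteq> x" by (rule eventually_neq_at_within)
      hence "\<forall>\<^sub>F z in at y. ind x z = ind x y"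
        by (rule eventually_mono) (use \<open>y \<noteq> x\<close> in \<open>auto simp: ind_def\<close>)
      hence "(ind x \<longlongrightarrow> ind x y) (at y)" by (rule tendsto_eventually)
      with y show False by simp
    qed
  qed
  hence "finite {y. \<not> (ind x \<longlongrightarrow> ind x y) (at y)}" using finite_subset by blast
  ultimately show ?thesis by (simp add: CcF_def)
qed

lemma scale_CcF: assumes "f \<in> CcF" shows "(\<lambda>z. 2 * f z) \<in> CcF"
proof -
  have "range (\<lambda>z. 2 * f z) = (\<lambda>t. 2*t) ` range f" by auto
  hence c: "countable (range (\<lambda>z. 2 * f z))" using assms by (simp add: CcF_def)
  have "{x. \<not> ((\<lambda>z. 2 * f z) \<longlongrightarrow> 2 * f x) (at x)} \<subseteq> {x. \<not> (f \<longlongrightarrow> f x) (at x)}"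
    using tendsto_mult_left by blast
  hence "finite {x. \<not> ((\<lambda>z. 2 * f z) \<longlongrightarrow> 2 * f x) (at x)}"
    using assms finite_subset by (auto simp: CcF_def)
  with c show ?thesis by (simp add: CcF_def)
qed

lemma scale_vertex: assumes "zd_vertex f" shows "zd_vertex (\<lambda>z. 2 * f z)"
  using assms scale_CcF unfolding zd_vertex_def by (auto simp: fun_eq_iff)

lemma ind_vertex: assumes "\<exists>a b :: 'a::t1_space. a \<noteq> b" shows "zd_vertex (ind (x::'a))"
proof -
  obtain y :: 'a where "y \<noteq> x" using assms by metis
  have "ind y \<noteq> (\<lambda>z. 0)" "ind x \<noteq> (\<lambda>z. 0)" by (auto simp: ind_def fun_eq_iff dest: fun_cong[where x=y] fun_cong[where x=x])
  moreover have "\<forall>z. ind x z * ind y z = 0" using \<open>y \<noteq> x\<close> by (simp add: ind_def)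
  ultimately show ?thesis unfolding zd_vertex_def using ind_CcF by blast
qed

lemma adj_sym: "zd_adj f g \<Longrightarrow> zd_adj g f"
  unfolding zd_adj_def by (auto simp: mult.commute)

lemma adj_of3: assumes A: "\<forall>i < length cs. zd_adj (cs ! i) (cs ! ((i + 1) mod length cs))" and cs: "cs=[a,b,c]"
  shows "zd_adj a b" "zd_adj b c" "zd_adj c a"
  using A[rule_format, of 0] apply (simp add: cs)
  using A[rule_format, of 1] apply (simp add: cs)
  using A[rule_format, of 2] apply (simp add: cs)
  done

lemma adj_of4: assumes A: "\<forall>i < length cs. zd_adj (cs ! i) (cs ! ((i + 1) mod length cs))" and cs: "cs=[a,b,c,d]"
  shows "zd_adj a b" "zd_adj b c" "zd_adj c d" "zd_adj d a"
  using A[rule_format, of 0] apply (simp add: cs)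
  using A[rule_format, of 1] apply (simp add: cs)
  using A[rule_format, of 2] apply (simp add: cs)
  using A[rule_format, of 3] apply (simp add: cs)
  done

lemma adj_of5: assumes A: "\<forall>i < length cs. zd_adj (cs ! i) (cs ! ((i + 1) mod length cs))" and cs: "cs=[a,b,c,d,e]"
  shows "zd_adj a b" "zd_adj b c" "zd_adj c d" "zd_adj d e" "zd_adj e a"
  using A[rule_format, of 0] apply (simp add: cs)
  using A[rule_format, of 1] apply (simp add: cs)
  using A[rule_format, of 2] apply (simp add: cs)
  using A[rule_format, of 3] apply (simp add: cs)
  using A[rule_format, of 4] apply (simp add: cs)
  done

lemma cyc3: assumes "distinct [a,b,c]" "zd_adj a b" "zd_adj b c" "zd_adj c a"
  shows "zd_cycle [a,b,c]"
  unfolding zd_cycle_def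
proof (intro conjI allI impI)
  fix i assume "i < length [a,b,c]"
  hence "i = 0 \<or> i = 1 \<or> i = 2" by auto
  thus "zd_adj ([a,b,c] ! i) ([a,b,c] ! ((i + 1) mod length [a,b,c]))"
    using assms by (elim disjE) simp_all
qed (use assms in auto)

lemma cyc4: assumes "distinct [a,b,c,d]" "zd_adj a b" "zd_adj b c" "zd_adj c d" "zd_adj d a"
  shows "zd_cycle [a,b,c,d]"
  unfolding zd_cycle_def
proof (intro conjI allI impI)
  fix i assume "i < length [a,b,c,d]"
  hence "i = 0 \<or> i = 1 \<or> i = 2 \<or> i = 3" by auto
  thus "zd_adj ([a,b,c,d] ! i) ([a,b,c,d] ! ((i + 1) mod length [a,b,c,d]))"
    using assms by (elim disjE) simp_all
qed (use assms in auto)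

lemma cyc6: assumes "distinct [a,b,c,d,e,f]" "zd_adj a b" "zd_adj b c" "zd_adj c d" "zd_adj d e" "zd_adj e f" "zd_adj f a"
  shows "zd_cycle [a,b,c,d,e,f]"
  unfolding zd_cycle_def
proof (intro conjI allI impI)
  fix i assume "i < length [a,b,c,d,e,f]"
  hence "i = 0 \<or> i = 1 \<or> i = 2 \<or> i = 3 \<or> i = 4 \<or> i = 5" by auto
  thus "zd_adj ([a,b,c,d,e,f] ! i) ([a,b,c,d,e,f] ! ((i + 1) mod length [a,b,c,d,e,f]))"
    using assms by (elim disjE) simp_all
qed (use assms in auto)

lemma cyc_short:
  assumes "zd_cycle cs" "f \<in> set cs" "g \<in> set cs" "f \<noteq> g" "length cs \<le> 5"
  shows "zd_adj f g \<or> (\<exists>h. zd_adj f h \<and> zd_adj h g)"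
proof -
  have L: "length cs = 3 \<or> length cs = 4 \<or> length cs = 5" using assms(1,5) unfolding zd_cycle_def by auto
  have A: "\<forall>i < length cs. zd_adj (cs ! i) (cs ! ((i + 1) mod length cs))"
    using assms(1) unfolding zd_cycle_def by auto
  show ?thesis using L
  proof (elim disjE)
    assume "length cs = 3"
    then obtain a b c where cs: "cs = [a,b,c]" by (auto simp: numeral_eq_Suc length_Suc_conv)
    have "zd_adj a b" "zd_adj b c" "zd_adj c a" using adj_of3[OF A cs] by auto
    hence "zd_adj b a" "zd_adj c b" "zd_adj a c" by (simp_all add: adj_sym)
    moreover have "f = a \<or> f = b \<or> f = c" "g = a \<or> g = b \<or> g = c" using assms(2,3) unfolding cs by simp_all
    ultimately show ?thesis using assms(4) \<open>zd_adj a b\<close> \<open>zd_adj b c\<close> \<open>zd_adj c a\<close> by (elim disjE) blast+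
  next
    assume "length cs = 4"
    then obtain a b c d where cs: "cs = [a,b,c,d]" by (auto simp: numeral_eq_Suc length_Suc_conv)
    have "zd_adj a b" "zd_adj b c" "zd_adj c d" "zd_adj d a" using adj_of4[OF A cs] by auto
    hence "zd_adj b a" "zd_adj c b" "zd_adj d c" "zd_adj a d" by (simp_all add: adj_sym)
    moreover have "f = a \<or> f = b \<or> f = c \<or> f = d" "g = a \<or> g = b \<or> g = c \<or> g = d" using assms(2,3) unfolding cs by simp_all
    ultimately show ?thesis using assms(4) \<open>zd_adj a b\<close> \<open>zd_adj b c\<close> \<open>zd_adj c d\<close> \<open>zd_adj d a\<close> by (elim disjE) blast+
  next
    assume "length cs = 5"
    then obtain a b c d e where cs: "cs = [a,b,c,d,e]" by (auto simp: numeral_eq_Suc length_Suc_conv)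
    have "zd_adj a b" "zd_adj b c" "zd_adj c d" "zd_adj d e" "zd_adj e a" using adj_of5[OF A cs] by auto
    hence "zd_adj b a" "zd_adj c b" "zd_adj d c" "zd_adj e d" "zd_adj a e" by (simp_all add: adj_sym)
    moreover have "f = a \<or> f = b \<or> f = c \<or> f = d \<or> f = e" "g = a \<or> g = b \<or> g = c \<or> g = d \<or> g = e" using assms(2,3) unfolding cs by simp_all
    ultimately show ?thesis using assms(4) \<open>zd_adj a b\<close> \<open>zd_adj b c\<close> \<open>zd_adj c d\<close> \<open>zd_adj d e\<close> \<open>zd_adj e a\<close> by (elim disjE) blast+
  qed
qed

lemma cyc_three:
  assumes "zd_cycle cs" "f \<in> set cs" "g \<in> set cs" "f \<noteq> g" "length cs = 3"
  shows "zd_adj f g \<and> (\<exists>h. zd_adj f h \<and> zd_adj h g)"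
proof -
  have A: "\<forall>i < length cs. zd_adj (cs ! i) (cs ! ((i + 1) mod length cs))"
    using assms(1) unfolding zd_cycle_def by auto
  obtain a b c where cs: "cs = [a,b,c]" using assms(5) by (auto simp: numeral_eq_Suc length_Suc_conv)
  have "zd_adj a b" "zd_adj b c" "zd_adj c a" using adj_of3[OF A cs] by auto
  hence "zd_adj b a" "zd_adj c b" "zd_adj a c" by (simp_all add: adj_sym)
  moreover have "f = a \<or> f = b \<or> f = c" "g = a \<or> g = b \<or> g = c" using assms(2,3) unfolding cs by simp_all
  ultimately show ?thesis using assms(4) \<open>zd_adj a b\<close> \<open>zd_adj b c\<close> \<open>zd_adj c a\<close> by (elim disjE) blast+
qed

lemma cfg_eq:
  assumes "zd_cycle cs" "f \<in> set cs" "g \<in> set cs" "length cs = n"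
    and "\<And>cs. zd_cycle cs \<Longrightarrow> f \<in> set cs \<Longrightarrow> g \<in> set cs \<Longrightarrow> n \<le> length cs"
  shows "cfg f g = enat n"
  unfolding cfg_def
proof (rule antisym)
  show "Inf {enat (length cs) | cs. zd_cycle cs \<and> f \<in> set cs \<and> g \<in> set cs} \<le> enat n"
    using assms(1-4) by (intro Inf_lower) auto
  show "enat n \<le> Inf {enat (length cs) | cs. zd_cycle cs \<and> f \<in> set cs \<and> g \<in> set cs}"
    using assms(5) by (intro Inf_greatest) auto
qed

lemma common_nbr: "zd_adj f h \<Longrightarrow> zd_adj h g \<Longrightarrow> Zset f \<inter> Zset g \<noteq> {}"
  unfolding zd_adj_def zd_vertex_def Zset_def by (auto simp: fun_eq_iff)

lemma adj_U: "zd_adj f g \<Longrightarrow> Zset f \<union> Zset g = UNIV"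
  unfolding zd_adj_def Zset_def by auto

lemma neqI: "f z \<noteq> g z \<Longrightarrow> f \<noteq> g" by auto

lemma case1:
  fixes f g :: "'a::t1_space \<Rightarrow> real"
  assumes two: "\<exists>a b :: 'a. a \<noteq> b"
    and vf: "zd_vertex f" and vg: "zd_vertex g" and fg: "f \<noteq> g"
    and U: "Zset f \<union> Zset g = UNIV" and I: "Zset f \<inter> Zset g \<noteq> {}"
  shows "cfg f g = 3"
proof -
  have fg0: "\<forall>z. f z * g z = 0" using U unfolding Zset_def by auto
  obtain x where x: "f x = 0" "g x = 0" using I unfolding Zset_def by auto
  have n1: "f \<noteq> ind x" by (rule neqI[of _ x]) (simp add: x ind_def)
  have n2: "g \<noteq> ind x" by (rule neqI[of _ x]) (simp add: x ind_def)
  have a1: "\<forall>z. g z * ind x z = 0" "\<forall>z. ind x z * f z = 0" using x by (auto simp: ind_def)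
  have cyc: "zd_cycle [f, g, ind x]"
    by (rule cyc3) (use vf vg fg fg0 n1 n2 a1 ind_vertex[OF two, of x] in \<open>auto simp: zd_adj_def\<close>)
  have "cfg f g = enat 3"
    by (rule cfg_eq[OF cyc]) (auto simp: zd_cycle_def)
  thus ?thesis by (simp add: numeral_eq_enat)
qed

lemma case2:
  fixes f g :: "'a::t1_space \<Rightarrow> real"
  assumes two: "\<exists>a b :: 'a. a \<noteq> b"
    and vf: "zd_vertex f" and vg: "zd_vertex g" and fg: "f \<noteq> g"
    and U: "Zset f \<union> Zset g = UNIV" and I: "Zset f \<inter> Zset g = {}"
  shows "cfg f g = 4"
proof -
  have fg0: "\<forall>z. f z * g z = 0" using U unfolding Zset_def by auto
  define f2 where "f2 = (\<lambda>z. 2 * f z)"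
  define g2 where "g2 = (\<lambda>z. 2 * g z)"
  obtain a where a: "f a \<noteq> 0" using vf unfolding zd_vertex_def by (auto simp: fun_eq_iff)
  obtain b where b: "g b \<noteq> 0" using vg unfolding zd_vertex_def by (auto simp: fun_eq_iff)
  have ga: "g a = 0" and fb: "f b = 0" using fg0 a b by (metis mult_eq_0_iff)+
  have "f \<noteq> f2" by (rule neqI[of _ a]) (simp add: f2_def a)
  moreover have "f \<noteq> g2" by (rule neqI[of _ a]) (simp add: g2_def a ga)
  moreover have "g \<noteq> f2" by (rule neqI[of _ a]) (simp add: f2_def a ga)
  moreover have "g \<noteq> g2" by (rule neqI[of _ b]) (simp add: g2_def b)
  moreover have "f2 \<noteq> g2" by (rule neqI[of _ a]) (simp add: f2_def g2_def a ga)
  ultimately have d: "distinct [f, g, f2, g2]" using fg by simp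
  have a1: "\<forall>z. g z * f2 z = 0" "\<forall>z. f2 z * g2 z = 0" "\<forall>z. g2 z * f z = 0"
    using fg0 unfolding f2_def g2_def by (metis mult.commute mult.left_commute mult_zero_right)+
  have cyc: "zd_cycle [f, g, f2, g2]"
  proof -
    have "zd_vertex f2" "zd_vertex g2" using scale_vertex[OF vf] scale_vertex[OF vg] by (simp_all add: f2_def g2_def)
    thus ?thesis by (rule_tac cyc4) (use d vf vg fg0 a1 in \<open>auto simp: zd_adj_def\<close>)
  qed
  have "cfg f g = enat 4"
  proof (rule cfg_eq[OF cyc])
    fix cs assume c: "zd_cycle cs" "f \<in> set cs" "g \<in> set cs"
    show "4 \<le> length cs"
    proof (rule ccontr)
      assume "\<not> 4 \<le> length cs"
      hence "length cs = 3" using c(1) unfolding zd_cycle_def by auto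
      with cyc_three[OF c fg] common_nbr I show False by blast
    qed
  qed auto
  thus ?thesis by (simp add: numeral_eq_enat)
qed

lemma case3:
  fixes f g :: "'a::t1_space \<Rightarrow> real"
  assumes two: "\<exists>a b :: 'a. a \<noteq> b"
    and vf: "zd_vertex f" and vg: "zd_vertex g" and fg: "f \<noteq> g"
    and nU: "Zset f \<union> Zset g \<noteq> UNIV" and I: "Zset f \<inter> Zset g \<noteq> {}"
  shows "cfg f g = 4"
proof -
  obtain x where x: "f x = 0" "g x = 0" using I unfolding Zset_def by auto
  define i2 where "i2 = (\<lambda>z. 2 * ind x z)"
  have "f \<noteq> ind x" by (rule neqI[of _ x]) (simp add: x ind_def)
  moreover have "g \<noteq> ind x" by (rule neqI[of _ x]) (simp add: x ind_def)
  moreover have "f \<noteq> i2" by (rule neqI[of _ x]) (simp add: x ind_def i2_def)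
  moreover have "g \<noteq> i2" by (rule neqI[of _ x]) (simp add: x ind_def i2_def)
  moreover have "ind x \<noteq> i2" by (rule neqI[of _ x]) (simp add: ind_def i2_def)
  ultimately have d: "distinct [f, ind x, g, i2]" using fg by auto
  have a1: "\<forall>z. f z * ind x z = 0" "\<forall>z. ind x z * g z = 0" "\<forall>z. g z * i2 z = 0" "\<forall>z. i2 z * f z = 0"
    using x by (auto simp: ind_def i2_def)
  have cyc: "zd_cycle [f, ind x, g, i2]"
  proof -
    have "zd_vertex i2" using scale_vertex[OF ind_vertex[OF two, of x]] by (simp add: i2_def)
    thus ?thesis by (rule_tac cyc4) (use d vf vg a1 ind_vertex[OF two, of x] in \<open>auto simp: zd_adj_def\<close>)
  qed
  have "cfg f g = enat 4"
  proof (rule cfg_eq[OF cyc])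
    fix cs assume c: "zd_cycle cs" "f \<in> set cs" "g \<in> set cs"
    show "4 \<le> length cs"
    proof (rule ccontr)
      assume "\<not> 4 \<le> length cs"
      hence "length cs = 3" using c(1) unfolding zd_cycle_def by auto
      with cyc_three[OF c fg] adj_U nU show False by blast
    qed
  qed auto
  thus ?thesis by (simp add: numeral_eq_enat)
qed

lemma case4:
  fixes f g :: "'a::t1_space \<Rightarrow> real"
  assumes two: "\<exists>a b :: 'a. a \<noteq> b"
    and vf: "zd_vertex f" and vg: "zd_vertex g" and fg: "f \<noteq> g"
    and nU: "Zset f \<union> Zset g \<noteq> UNIV" and I: "Zset f \<inter> Zset g = {}"
  shows "cfg f g = 6"
proof -
  obtain w where w: "f w \<noteq> 0" "g w \<noteq> 0" using nU unfolding Zset_def by auto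
  have disj: "\<forall>z. f z = 0 \<longrightarrow> g z \<noteq> 0" using I unfolding Zset_def by auto
  obtain x where x: "f x = 0" using vf unfolding zd_vertex_def by (auto simp: fun_eq_iff)
  obtain y where y: "g y = 0" using vg unfolding zd_vertex_def by (auto simp: fun_eq_iff)
  have gx: "g x \<noteq> 0" and fy: "f y \<noteq> 0" using disj x y by auto
  have xy: "x \<noteq> y" using gx y by auto
  have wx: "w \<noteq> x" and wy: "w \<noteq> y" using w x y by auto
  define ix2 where "ix2 = (\<lambda>z. 2 * ind x z)"
  define iy2 where "iy2 = (\<lambda>z. 2 * ind y z)"
  have "f \<noteq> ind x" by (rule neqI[of _ x]) (simp add: x ind_def)
  moreover have "f \<noteq> ix2" by (rule neqI[of _ x]) (simp add: x ind_def ix2_def)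
  moreover have "f \<noteq> ind y" by (rule neqI[of _ w]) (simp add: w wy ind_def)
  moreover have "f \<noteq> iy2" by (rule neqI[of _ w]) (simp add: w wy ind_def iy2_def)
  moreover have "g \<noteq> ind y" by (rule neqI[of _ y]) (simp add: y ind_def)
  moreover have "g \<noteq> iy2" by (rule neqI[of _ y]) (simp add: y ind_def iy2_def)
  moreover have "g \<noteq> ind x" by (rule neqI[of _ w]) (simp add: w wx ind_def)
  moreover have "g \<noteq> ix2" by (rule neqI[of _ w]) (simp add: w wx ind_def ix2_def)
  moreover have "ind x \<noteq> ind y" by (rule neqI[of _ x]) (simp add: xy ind_def)
  moreover have "ind x \<noteq> iy2" by (rule neqI[of _ x]) (simp add: xy xy[symmetric] ind_def iy2_def)
  moreover have "ind x \<noteq> ix2" by (rule neqI[of _ x]) (simp add: ind_def ix2_def)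
  moreover have "ind y \<noteq> iy2" by (rule neqI[of _ y]) (simp add: ind_def iy2_def)
  moreover have "ind y \<noteq> ix2" by (rule neqI[of _ y]) (simp add: xy xy[symmetric] ind_def ix2_def)
  moreover have "iy2 \<noteq> ix2" by (rule neqI[of _ y]) (simp add: xy xy[symmetric] ind_def ix2_def iy2_def)
  ultimately have d: "distinct [f, ind x, ind y, g, iy2, ix2]" using fg by auto
  have a1: "\<forall>z. f z * ind x z = 0" "\<forall>z. ind x z * ind y z = 0" "\<forall>z. ind y z * g z = 0"
     "\<forall>z. g z * iy2 z = 0" "\<forall>z. iy2 z * ix2 z = 0" "\<forall>z. ix2 z * f z = 0"
    using x y xy by (auto simp: ind_def ix2_def iy2_def)
  have cyc: "zd_cycle [f, ind x, ind y, g, iy2, ix2]"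
  proof -
    have "zd_vertex ix2" "zd_vertex iy2" using scale_vertex[OF ind_vertex[OF two, of x]] scale_vertex[OF ind_vertex[OF two, of y]]
      by (simp_all add: ix2_def iy2_def)
    thus ?thesis by (rule_tac cyc6) (use d vf vg a1 ind_vertex[OF two, of x] ind_vertex[OF two, of y] in \<open>auto simp: zd_adj_def\<close>)
  qed
  have "cfg f g = enat 6"
  proof (rule cfg_eq[OF cyc])
    fix cs assume c: "zd_cycle cs" "f \<in> set cs" "g \<in> set cs"
    show "6 \<le> length cs"
    proof (rule ccontr)
      assume "\<not> 6 \<le> length cs"
      hence "length cs \<le> 5" by simp
      from cyc_short[OF c fg this] adj_U nU common_nbr I show False by blast
    qed
  qed auto
  thus ?thesis by (simp add: numeral_eq_enat)
qed

lemma the_cases: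
  fixes f g :: "'a::t1_space \<Rightarrow> real"
  assumes two: "\<exists>a b :: 'a. a \<noteq> b"
    and vf: "zd_vertex f" and vg: "zd_vertex g" and fg: "f \<noteq> g"
  shows "cfg f g = (if Zset f \<union> Zset g = UNIV then (if Zset f \<inter> Zset g \<noteq> {} then 3 else 4)
           else (if Zset f \<inter> Zset g \<noteq> {} then 4 else 6))"
  using case1[OF assms] case2[OF assms] case3[OF assms] case4[OF assms] by auto

theorem theorem8p16:
  fixes f g :: "'a::t1_space \<Rightarrow> real"
  assumes "\<exists>a b :: 'a. a \<noteq> b"
    and "zd_vertex f" and "zd_vertex g" and "f \<noteq> g"
  shows "(cfg f g = 3 \<longleftrightarrow> Zset f \<union> Zset g = UNIV \<and> Zset f \<inter> Zset g \<noteq> {})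
    \<and> (cfg f g = 4 \<longleftrightarrow> (Zset f \<union> Zset g = UNIV \<and> Zset f \<inter> Zset g = {})
                        \<or> (Zset f \<union> Zset g \<noteq> UNIV \<and> Zset f \<inter> Zset g \<noteq> {}))
    \<and> (cfg f g = 6 \<longleftrightarrow> Zset f \<union> Zset g \<noteq> UNIV \<and> Zset f \<inter> Zset g = {})"
  using the_cases[OF assms] by (auto split: if_splits)

end
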